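(* Let $n\geq 3$, $d\geq 2$ and $T\geq 1$ be integers, and let $\Phi_T:\mathbb{R}^{d\times n}\to\mathbb{R}^m$ be a 1-WL geometric model (as defined in the context) in which all the functions $\phi_t,\psi_t$ and $\mathrm{ReadOut}$ are upper Lipschitz. Then $\Phi_T$ is not lower Lipschitz with respect to $d_{\mathcal{G}_{\pm}}$; that is, there is no $c>0$ such that $c\, d_{\mathcal{G}_{\pm}}({X},{Y})\leq\|\Phi_T({X})-\Phi_T({Y})\|_2$ for all ${X},{Y}\in\mathbb{R}^{d\times n}$.
   Context: A point set is ${X}\in\mathbb{R}^{d\times n}$ with columns $x_1,\dots,x_n\in\mathbb{R}^d$. A 1-WL geometric model with $T$ iterations is defined as follows: set $c_i^0=0$ for all $i\in[n]$, and for $t=0,\dots,T-1$, $$c_i^{t+1}=\phi_t\Big(c_i^t,\ \psi_t\big(\{\!\{(c_i^t,c_j^t,\|x_i-x_j\|_2)\mid j\in[n]\}\!\}\big)\Big),$$ and finally $\Phi_T({X})=\mathrm{ReadOut}(\{\!\{c_1^T,\dots,c_n^T\}\!\})$. Here $\phi_t$ are functions between Euclidean spaces, and $\psi_t$, $\mathrm{ReadOut}$ are multiset functions, i.e. functions of a matrix whose columns are the multiset elements, invariant to permuting these columns; Lipschitzness of a multiset function means Lipschitzness of this matrix function in the Euclidean sense. The Procrustes Matching metric is $$d_{\mathcal{G}_{\pm}}({X},{Y})=\Big[\min_{(\pi,R,t)\in S_n\times O(d)\times\mathbb{R}^d}\sum_{j=1}^n\|x_j-Ry_{\pi(j)}+t\|_2^2\Big]^{1/2}.$$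 *)

theory Defs
  imports "HOL-Analysis.Analysis"
begin

text \<open>Vectors of R^a are represented as real lists of length a; a matrix whose
  n columns lie in R^a is a function from the (finite) column index type to such lists.\<close>

definition ldist :: "real list \<Rightarrow> real list \<Rightarrow> real" where
  "ldist u v = sqrt (sum_list (map (\<lambda>(a, b). (a - b)\<^sup>2) (zip u v)))"

definition mat_dist :: "('n::finite \<Rightarrow> real list) \<Rightarrow> ('n \<Rightarrow> real list) \<Rightarrow> real" where
  "mat_dist M N = sqrt (\<Sum>j\<in>UNIV. sum_list (map (\<lambda>(a, b). (a - b)\<^sup>2) (zip (M j) (N j))))"

definition euclid_map :: "nat \<Rightarrow> nat \<Rightarrow> (real list \<Rightarrow> real list) \<Rightarrow> bool" where
  "euclid_map a b f \<longleftrightarrow> (\<forall>v. length v = a \<longrightarrow> length (f v) = b)"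

definition lipschitz_vec :: "nat \<Rightarrow> (real list \<Rightarrow> real list) \<Rightarrow> bool" where
  "lipschitz_vec a f \<longleftrightarrow> (\<exists>L. \<forall>u v. length u = a \<longrightarrow> length v = a \<longrightarrow>
      ldist (f u) (f v) \<le> L * ldist u v)"

text \<open>multiset function: maps R^{a x n} -> R^b and is invariant under column permutations\<close>
definition multiset_map :: "nat \<Rightarrow> nat \<Rightarrow> (('n::finite \<Rightarrow> real list) \<Rightarrow> real list) \<Rightarrow> bool" where
  "multiset_map a b f \<longleftrightarrow> (\<forall>M. (\<forall>j. length (M j) = a) \<longrightarrow>
      length (f M) = b \<and> (\<forall>\<sigma>. \<sigma> permutes (UNIV :: 'n set) \<longrightarrow> f (M \<circ> \<sigma>) = f M))"

definition lipschitz_mset :: "nat \<Rightarrow> (('n::finite \<Rightarrow> real list) \<Rightarrow> real list) \<Rightarrow> bool" where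
  "lipschitz_mset a f \<longleftrightarrow> (\<exists>L. \<forall>M N. (\<forall>j. length (M j) = a) \<longrightarrow> (\<forall>j. length (N j) = a) \<longrightarrow>
      ldist (f M) (f N) \<le> L * mat_dist M N)"

text \<open>Colours c_i^t of the 1-WL geometric model; the point set X is a d x n matrix with
  columns x_i = column i X; c^0 = 0 in R^{k0}.\<close>
primrec wl_colors ::
  "(nat \<Rightarrow> real list \<Rightarrow> real list) \<Rightarrow> (nat \<Rightarrow> ('n::finite \<Rightarrow> real list) \<Rightarrow> real list)
   \<Rightarrow> nat \<Rightarrow> real^'n^'d \<Rightarrow> nat \<Rightarrow> 'n \<Rightarrow> real list" where
  "wl_colors \<phi> \<psi> k0 X 0 i = replicate k0 0"
| "wl_colors \<phi> \<psi> k0 X (Suc t) i =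
     \<phi> t (wl_colors \<phi> \<psi> k0 X t i @
           \<psi> t (\<lambda>j. wl_colors \<phi> \<psi> k0 X t i @ wl_colors \<phi> \<psi> k0 X t j
                      @ [norm (column i X - column j X)]))"

definition wl_model ::
  "(nat \<Rightarrow> real list \<Rightarrow> real list) \<Rightarrow> (nat \<Rightarrow> ('n::finite \<Rightarrow> real list) \<Rightarrow> real list)
   \<Rightarrow> (('n \<Rightarrow> real list) \<Rightarrow> real list) \<Rightarrow> nat \<Rightarrow> nat \<Rightarrow> real^'n^'d \<Rightarrow> real list" where
  "wl_model \<phi> \<psi> readout k0 T X = readout (\<lambda>i. wl_colors \<phi> \<psi> k0 X T i)"

text \<open>Procrustes matching metric (the minimum is attained; we write it as an infimum)\<close>
definition procrustes_dist :: "real^'n::finite^'d::finite \<Rightarrow> real^'n^'d \<Rightarrow> real" where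
  "procrustes_dist X Y = sqrt (Inf {(\<Sum>j\<in>UNIV. (norm (column j X - R *v column (\<pi> j) Y + t))\<^sup>2) | \<pi> R t.
       \<pi> permutes (UNIV :: 'n set) \<and> orthogonal_matrix (R :: real^'d^'d)})"

end

theory Submission imports Defs begin

definition sqd :: "real list \<Rightarrow> real list \<Rightarrow> real" where
  "sqd u v = sum_list (map (\<lambda>(a, b). (a - b)\<^sup>2) (zip u v))"

lemma sqd_nonneg: "0 \<le> sqd u v"
  unfolding sqd_def by (rule sum_list_nonneg) auto

lemma ldist_sqd: "ldist u v = sqrt (sqd u v)"
  by (simp add: ldist_def sqd_def)

lemma ldist_nonneg: "0 \<le> ldist u v"
  by (simp add: ldist_sqd sqd_nonneg)

lemma ldist_self: "ldist u u = 0"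
  unfolding ldist_def by (induction u) auto

lemma ldist_append:
  assumes "length a = length c"
  shows "ldist (a @ b) (c @ d) \<le> ldist a c + ldist b d"
proof -
  have "sqd (a @ b) (c @ d) = sqd a c + sqd b d"
    using assms by (simp add: sqd_def zip_append)
  then show ?thesis
    by (simp add: ldist_sqd sqrt_add_le_add_sqrt sqd_nonneg)
qed

lemma ldist_single: "ldist [x] [y] = \<bar>x - y\<bar>"
  by (simp add: ldist_def)

lemma sqrt_sum_le:
  assumes "finite A" "\<forall>x\<in>A. 0 \<le> f x"
  shows "sqrt (sum f A) \<le> (\<Sum>x\<in>A. sqrt (f x))"
  using assms
proof (induction A rule: finite_induct)
  case empty then show ?case by simp
next
  case (insert x F)
  have "sqrt (sum f (insert x F)) = sqrt (f x + sum f F)" using insert by simp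
  also have "\<dots> \<le> sqrt (f x) + sqrt (sum f F)"
    using insert by (intro sqrt_add_le_add_sqrt) (auto intro: sum_nonneg)
  also have "\<dots> \<le> sqrt (f x) + (\<Sum>y\<in>F. sqrt (f y))" using insert by auto
  finally show ?case using insert by simp
qed

lemma mat_dist_le: "mat_dist M N \<le> (\<Sum>j\<in>UNIV. ldist (M j) (N j))"
proof -
  have "mat_dist M N = sqrt (\<Sum>j\<in>UNIV. sqd (M j) (N j))"
    by (simp add: mat_dist_def sqd_def)
  also have "\<dots> \<le> (\<Sum>j\<in>UNIV. sqrt (sqd (M j) (N j)))"
    by (rule sqrt_sum_le) (auto simp: sqd_nonneg)
  finally show ?thesis by (simp add: ldist_sqd)
qed

lemma lip_vec_obtain:
  assumes "lipschitz_vec a f"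
  obtains L where "L \<ge> 0" "\<And>u v. length u = a \<Longrightarrow> length v = a \<Longrightarrow> ldist (f u) (f v) \<le> L * ldist u v"
proof -
  obtain L where L: "\<forall>u v. length u = a \<longrightarrow> length v = a \<longrightarrow> ldist (f u) (f v) \<le> L * ldist u v"
    using assms unfolding lipschitz_vec_def by blast
  show ?thesis
  proof (rule that[of "max L 0"])
    fix u v :: "real list" assume "length u = a" "length v = a"
    then have "ldist (f u) (f v) \<le> L * ldist u v" using L by blast
    also have "\<dots> \<le> max L 0 * ldist u v" by (intro mult_right_mono) (auto simp: ldist_nonneg)
    finally show "ldist (f u) (f v) \<le> max L 0 * ldist u v" .
  qed simp
qed

lemma lip_mset_obtain:
  assumes "lipschitz_mset a f"
  obtains L where "L \<ge> 0" "\<And>M N. (\<forall>j. length (M j) = a) \<Longrightarrow> (\<forall>j. length (N j) = a) \<Longrightarrow> ldist (f M) (f N) \<le> L * mat_dist M N"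
proof -
  obtain L where L: "\<forall>M N. (\<forall>j. length (M j) = a) \<longrightarrow> (\<forall>j. length (N j) = a) \<longrightarrow> ldist (f M) (f N) \<le> L * mat_dist M N"
    using assms unfolding lipschitz_mset_def by blast
  have md: "0 \<le> mat_dist M N" for M N :: "'a \<Rightarrow> real list"
    unfolding mat_dist_def by (intro real_sqrt_ge_zero sum_nonneg) (metis sqd_def sqd_nonneg)
  show ?thesis
  proof (rule that[of "max L 0"])
    fix M N :: "'a \<Rightarrow> real list" assume "\<forall>j. length (M j) = a" "\<forall>j. length (N j) = a"
    then have "ldist (f M) (f N) \<le> L * mat_dist M N" using L by blast
    also have "\<dots> \<le> max L 0 * mat_dist M N" by (intro mult_right_mono) (auto simp: md)
    finally show "ldist (f M) (f N) \<le> max L 0 * mat_dist M N" .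
  qed simp
qed

definition Dlt :: "real^'n::finite^'d::finite \<Rightarrow> real^'n^'d \<Rightarrow> real" where
  "Dlt X Y = (\<Sum>i\<in>UNIV. \<Sum>j\<in>UNIV. \<bar>norm (column i X - column j X) - norm (column i Y - column j Y)\<bar>)"

lemma Dlt_row: "(\<Sum>j\<in>UNIV. \<bar>norm (column i X - column j X) - norm (column i Y - column j Y)\<bar>) \<le> Dlt X Y"
  unfolding Dlt_def
  by (rule member_le_sum[where f="\<lambda>i. \<Sum>j\<in>UNIV. \<bar>norm (column i X - column j X) - norm (column i Y - column j Y)\<bar>"]) (auto intro: sum_nonneg)

lemma Dlt_nonneg: "0 \<le> Dlt X Y"
  unfolding Dlt_def by (intro sum_nonneg) auto


lemma colors_len:
  fixes \<phi> :: "nat \<Rightarrow> real list \<Rightarrow> real list"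
    and \<psi> :: "nat \<Rightarrow> ('n::finite \<Rightarrow> real list) \<Rightarrow> real list"
  assumes A4: "\<forall>t<T. multiset_map (2 * k t + 1) (p t) (\<psi> t)"
    and A5: "\<forall>t<T. euclid_map (k t + p t) (k (Suc t)) (\<phi> t)"
  shows "t \<le> T \<Longrightarrow> length (wl_colors \<phi> \<psi> (k 0) (X :: real^'n^'d::finite) t i) = k t"
proof (induction t arbitrary: i)
  case 0 then show ?case by simp
next
  case (Suc t)
  then have tT: "t < T" by simp
  have IH: "\<And>j. length (wl_colors \<phi> \<psi> (k 0) X t j) = k t" using Suc by simp
  have "length (\<psi> t (\<lambda>j. wl_colors \<phi> \<psi> (k 0) X t i @ wl_colors \<phi> \<psi> (k 0) X t j
                      @ [norm (column i X - column j X)])) = p t"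
    using A4 tT IH unfolding multiset_map_def by auto
  then show ?case using A5 tT IH unfolding euclid_map_def by simp
qed

lemma colors_lip:
  fixes \<phi> :: "nat \<Rightarrow> real list \<Rightarrow> real list"
    and \<psi> :: "nat \<Rightarrow> ('n::finite \<Rightarrow> real list) \<Rightarrow> real list"
  assumes A4: "\<forall>t<T. multiset_map (2 * k t + 1) (p t) (\<psi> t) \<and> lipschitz_mset (2 * k t + 1) (\<psi> t)"
    and A5: "\<forall>t<T. euclid_map (k t + p t) (k (Suc t)) (\<phi> t) \<and> lipschitz_vec (k t + p t) (\<phi> t)"
  shows "t \<le> T \<Longrightarrow> \<exists>C\<ge>0. \<forall>(X :: real^'n^'d::finite) Y i.
     ldist (wl_colors \<phi> \<psi> (k 0) X t i) (wl_colors \<phi> \<psi> (k 0) Y t i) \<le> C * Dlt X Y"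
proof (induction t)
  case 0 then show ?case by (auto simp: ldist_self)
next
  case (Suc t)
  then have tT: "t < T" by simp
  obtain C where C0: "C \<ge> 0" and C: "\<And>(X :: real^'n^'d) Y i.
     ldist (wl_colors \<phi> \<psi> (k 0) X t i) (wl_colors \<phi> \<psi> (k 0) Y t i) \<le> C * Dlt X Y"
    using Suc by auto
  have len: "\<And>(X :: real^'n^'d) j. length (wl_colors \<phi> \<psi> (k 0) X t j) = k t"
  proof -
    fix X :: "real^'n^'d" and j
    show "length (wl_colors \<phi> \<psi> (k 0) X t j) = k t"
      by (rule colors_len[of T k p \<psi> \<phi>]) (use A4 A5 tT in auto)
  qed
  obtain Lp where Lp0: "Lp \<ge> 0" and Lp: "\<And>M N. (\<forall>j. length (M j) = 2 * k t + 1) \<Longrightarrow> (\<forall>j. length (N j) = 2 * k t + 1) \<Longrightarrow> ldist (\<psi> t M) (\<psi> t N) \<le> Lp * mat_dist M N"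
    using A4 tT lip_mset_obtain by metis
  obtain Lf where Lf0: "Lf \<ge> 0" and Lf: "\<And>u v. length u = k t + p t \<Longrightarrow> length v = k t + p t \<Longrightarrow> ldist (\<phi> t u) (\<phi> t v) \<le> Lf * ldist u v"
    using A5 tT lip_vec_obtain by metis
  define C' where "C' = Lf * (C + Lp * (2 * real CARD('n) * C + 1))"
  show ?case
  proof (intro exI[of _ C'] conjI allI)
    show "0 \<le> C'" unfolding C'_def using C0 Lp0 Lf0 by simp
    fix X Y :: "real^'n^'d" and i
    define cX where "cX = wl_colors \<phi> \<psi> (k 0) X t"
    define cY where "cY = wl_colors \<phi> \<psi> (k 0) Y t"
    define MX where "MX = (\<lambda>j. cX i @ cX j @ [norm (column i X - column j X)])"
    define MY where "MY = (\<lambda>j. cY i @ cY j @ [norm (column i Y - column j Y)])"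
    have lX: "\<And>j. length (cX j) = k t" and lY: "\<And>j. length (cY j) = k t"
      using len by (auto simp: cX_def cY_def)
    have lMX: "\<forall>j. length (MX j) = 2 * k t + 1" and lMY: "\<forall>j. length (MY j) = 2 * k t + 1"
      using lX lY by (auto simp: MX_def MY_def)
    have lpX: "length (\<psi> t MX) = p t" and lpY: "length (\<psi> t MY) = p t"
      using A4 tT lMX lMY unfolding multiset_map_def by auto
    have "mat_dist MX MY \<le> (\<Sum>j\<in>UNIV. ldist (MX j) (MY j))" by (rule mat_dist_le)
    also have "\<dots> \<le> (\<Sum>j\<in>UNIV. C * Dlt X Y + C * Dlt X Y + \<bar>norm (column i X - column j X) - norm (column i Y - column j Y)\<bar>)"
    proof (rule sum_mono)
      fix j
      have "ldist (MX j) (MY j) \<le> ldist (cX i) (cY i) + ldist (cX j @ [norm (column i X - column j X)]) (cY j @ [norm (column i Y - column j Y)])"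
        unfolding MX_def MY_def using lX lY by (intro ldist_append) simp
      also have "\<dots> \<le> ldist (cX i) (cY i) + (ldist (cX j) (cY j) + ldist [norm (column i X - column j X)] [norm (column i Y - column j Y)])"
        using lX lY ldist_append by (metis add_left_mono)
      also have "\<dots> \<le> C * Dlt X Y + C * Dlt X Y + \<bar>norm (column i X - column j X) - norm (column i Y - column j Y)\<bar>"
        using C[where X=X and Y=Y and i=i] C[where X=X and Y=Y and i=j] by (simp add: ldist_single cX_def cY_def)
      finally show "ldist (MX j) (MY j) \<le> C * Dlt X Y + C * Dlt X Y + \<bar>norm (column i X - column j X) - norm (column i Y - column j Y)\<bar>" .
    qed
    also have "\<dots> = real CARD('n) * (2 * C * Dlt X Y) + (\<Sum>j\<in>UNIV. \<bar>norm (column i X - column j X) - norm (column i Y - column j Y)\<bar>)"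
      by (simp add: sum.distrib)
    also have "\<dots> \<le> real CARD('n) * (2 * C * Dlt X Y) + Dlt X Y"
      using Dlt_row by simp
    finally have md: "mat_dist MX MY \<le> (2 * real CARD('n) * C + 1) * Dlt X Y" by (simp add: algebra_simps)
    have "ldist (\<psi> t MX) (\<psi> t MY) \<le> Lp * mat_dist MX MY" using Lp lMX lMY by blast
    also have "\<dots> \<le> Lp * ((2 * real CARD('n) * C + 1) * Dlt X Y)" using md Lp0 by (rule mult_left_mono)
    finally have pd: "ldist (\<psi> t MX) (\<psi> t MY) \<le> Lp * ((2 * real CARD('n) * C + 1) * Dlt X Y)" .
    have "ldist (wl_colors \<phi> \<psi> (k 0) X (Suc t) i) (wl_colors \<phi> \<psi> (k 0) Y (Suc t) i)
        = ldist (\<phi> t (cX i @ \<psi> t MX)) (\<phi> t (cY i @ \<psi> t MY))"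
      by (simp add: cX_def cY_def MX_def MY_def)
    also have "\<dots> \<le> Lf * ldist (cX i @ \<psi> t MX) (cY i @ \<psi> t MY)"
      using lX lY lpX lpY by (intro Lf) auto
    also have "\<dots> \<le> Lf * (ldist (cX i) (cY i) + ldist (\<psi> t MX) (\<psi> t MY))"
      using lX lY Lf0 by (intro mult_left_mono ldist_append) auto
    also have "\<dots> \<le> Lf * (C * Dlt X Y + Lp * ((2 * real CARD('n) * C + 1) * Dlt X Y))"
      using C[where X=X and Y=Y and i=i] pd Lf0 by (intro mult_left_mono) (auto simp: cX_def cY_def)
    also have "\<dots> = C' * Dlt X Y" by (simp add: C'_def algebra_simps)
    finally show "ldist (wl_colors \<phi> \<psi> (k 0) X (Suc t) i) (wl_colors \<phi> \<psi> (k 0) Y (Suc t) i) \<le> C' * Dlt X Y" .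
  qed
qed


lemma norm_two_axis:
  assumes "d1 \<noteq> d2"
  shows "norm (x *\<^sub>R axis d1 (1::real) + y *\<^sub>R axis d2 1) = sqrt (x\<^sup>2 + y\<^sup>2)"
  using assms by (simp add: norm_eq_sqrt_inner inner_add_left inner_add_right inner_axis_axis power2_eq_square)

lemma column_chi: "column j (\<chi> i j. (f j :: real^'d) $ i) = f j"
  by (simp add: column_def vec_eq_iff)

lemma sqrt_bound: "\<bar>sqrt (A + B) - sqrt A\<bar> \<le> e\<^sup>2"
  if "B = 0 \<or> (B = e\<^sup>2 \<and> A = 1)" for A B e :: real
proof (cases "B = 0")
  case True then show ?thesis by simp
next
  case False
  then have B: "B = e\<^sup>2" "A = 1" using that by auto
  have "sqrt (1 + e\<^sup>2) \<le> 1 + e\<^sup>2" 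
  proof (rule power2_le_imp_le)
    have "0 \<le> (e * e) * (e * e) + e * e" by simp
    then show "(sqrt (1 + e\<^sup>2))\<^sup>2 \<le> (1 + e\<^sup>2)\<^sup>2" by (simp add: power2_eq_square algebra_simps)
  qed simp
  moreover have "1 \<le> sqrt (1 + e\<^sup>2)" by simp
  ultimately show ?thesis using B by simp
qed


definition alp :: "'n \<Rightarrow> 'n \<Rightarrow> 'n \<Rightarrow> real" where
  "alp b c j = (if j = b then 1 else if j = c then 0 else -1)"

definition bet :: "'n \<Rightarrow> real \<Rightarrow> 'n \<Rightarrow> real" where
  "bet c e j = (if j = c then e else 0)"

definition PP :: "'d::finite \<Rightarrow> 'd \<Rightarrow> 'n \<Rightarrow> 'n \<Rightarrow> real \<Rightarrow> 'n \<Rightarrow> real^'d" where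
  "PP d1 d2 b c e j = alp b c j *\<^sub>R axis d1 1 + bet c e j *\<^sub>R axis d2 1"

definition XX :: "'d::finite \<Rightarrow> 'd \<Rightarrow> 'n::finite \<Rightarrow> 'n \<Rightarrow> real \<Rightarrow> real^'n^'d" where
  "XX d1 d2 b c e = (\<chi> i j. PP d1 d2 b c e j $ i)"

lemma col_XX: "column j (XX d1 d2 b c e) = PP d1 d2 b c e j"
  unfolding XX_def by (rule column_chi)

lemma Dlt_XX:
  fixes b c :: "'n::finite" and d1 d2 :: "'d::finite"
  assumes "d1 \<noteq> d2" "b \<noteq> c"
  shows "Dlt (XX d1 d2 b c e) (XX d1 d2 b c 0) \<le> real CARD('n) * real CARD('n) * e\<^sup>2"
proof -
  have diff: "PP d1 d2 b c e i - PP d1 d2 b c e j = (alp b c i - alp b c j) *\<^sub>R axis d1 1 + (bet c e i - bet c e j) *\<^sub>R axis d2 1" for e i j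
    by (simp add: PP_def algebra_simps)
  have trm: "\<bar>norm (column i (XX d1 d2 b c e) - column j (XX d1 d2 b c e)) - norm (column i (XX d1 d2 b c 0) - column j (XX d1 d2 b c 0))\<bar> \<le> e\<^sup>2" for i j :: 'n
  proof -
    have n1: "norm (column i (XX d1 d2 b c e) - column j (XX d1 d2 b c e)) = sqrt ((alp b c i - alp b c j)\<^sup>2 + (bet c e i - bet c e j)\<^sup>2)"
      unfolding col_XX diff using assms by (simp add: norm_two_axis)
    have n2: "norm (column i (XX d1 d2 b c 0) - column j (XX d1 d2 b c 0)) = sqrt ((alp b c i - alp b c j)\<^sup>2)"
      unfolding col_XX diff using assms by (simp add: norm_two_axis bet_def)
    have dj: "(bet c e i - bet c e j)\<^sup>2 = 0 \<or> ((bet c e i - bet c e j)\<^sup>2 = e\<^sup>2 \<and> (alp b c i - alp b c j)\<^sup>2 = 1)"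
      using assms by (auto simp: bet_def alp_def power2_eq_square)
    show ?thesis unfolding n1 n2 by (rule sqrt_bound[OF dj])
  qed
  have "Dlt (XX d1 d2 b c e) (XX d1 d2 b c 0) \<le> (\<Sum>i\<in>(UNIV::'n set). \<Sum>j\<in>(UNIV::'n set). e\<^sup>2)"
    unfolding Dlt_def by (intro sum_mono trm)
  then show ?thesis by simp
qed


lemma inner_diff_bound:
  fixes v x y :: "real^'d::finite"
  assumes "norm x \<le> s" "norm y \<le> s"
  shows "\<bar>inner v x - inner v y\<bar> \<le> 2 * norm v * s"
proof -
  have "\<bar>inner v x - inner v y\<bar> = \<bar>inner v (x - y)\<bar>" by (simp add: inner_diff_right)
  also have "\<dots> \<le> norm v * norm (x - y)" by (rule Cauchy_Schwarz_ineq2)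
  also have "\<dots> \<le> norm v * (norm x + norm y)" by (intro mult_left_mono norm_triangle_ineq4) simp
  also have "\<dots> \<le> norm v * (2 * s)" using assms by (intro mult_left_mono) auto
  finally show ?thesis by simp
qed

lemma lower_sum:
  fixes a b c :: "'n::finite" and d1 d2 :: "'d::finite"
  assumes "d1 \<noteq> d2" "a \<noteq> b" "a \<noteq> c" "b \<noteq> c" "0 < e" "e \<le> 1"
  shows "e\<^sup>2 / 10 \<le> (\<Sum>j\<in>UNIV. (norm (column j (XX d1 d2 b c e) - R *v column (\<pi> j) (XX d1 d2 b c 0) + t))\<^sup>2)"
    (is "_ \<le> ?S")
proof -
  define u where "u = R *v axis d1 1"
  define w where "w = (\<lambda>j. PP d1 d2 b c e j - alp b c (\<pi> j) *\<^sub>R u + t)"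
  have Rcol: "R *v column (\<pi> j) (XX d1 d2 b c 0) = alp b c (\<pi> j) *\<^sub>R u" for j
    by (simp add: col_XX PP_def bet_def u_def matrix_vector_mult_scaleR)
  have S_eq: "?S = (\<Sum>j\<in>UNIV. (norm (w j))\<^sup>2)"
    by (simp only: Rcol) (simp add: col_XX w_def)
  define s where "s = sqrt ?S"
  have wb: "norm (w j) \<le> s" for j
  proof -
    have "(norm (w j))\<^sup>2 \<le> ?S" unfolding S_eq by (rule member_le_sum) auto
    then show ?thesis unfolding s_def by (rule real_le_rsqrt)
  qed
  have S0: "0 \<le> ?S" by (intro sum_nonneg) auto
  have ss: "s\<^sup>2 = ?S" unfolding s_def using S0 by simp
  have s0: "0 \<le> s" unfolding s_def using S0 by simp
  have key: "\<bar>inner v (PP d1 d2 b c e i) - inner v (PP d1 d2 b c e j)\<bar> \<le> 2 * norm v * s"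
    if vu: "inner v u = 0" for v i j
  proof -
    have "inner v (PP d1 d2 b c e i) - inner v (PP d1 d2 b c e j) = inner v (w i) - inner v (w j)"
      using vu by (simp add: w_def inner_add_right inner_diff_right)
    then show ?thesis using inner_diff_bound[OF wb wb] by simp
  qed
  have ip: "inner (x *\<^sub>R axis d1 1 + y *\<^sub>R axis d2 1) (PP d1 d2 b c e j) = x * alp b c j + y * bet c e j" for x y j
    using assms(1) by (simp add: PP_def inner_add_left inner_add_right inner_axis_axis)
  have alps: "alp b c b = 1" "alp b c a = -1" "alp b c c = 0" "bet c e a = 0" "bet c e b = 0" "bet c e c = e"
    using assms by (auto simp: alp_def bet_def)
  define u1 where "u1 = u $ d1"
  define u2 where "u2 = u $ d2"
  show ?thesis
  proof (cases "u1 = 0 \<and> u2 = 0")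
    case True
    define v where "v = 1 *\<^sub>R axis d1 (1::real) + 0 *\<^sub>R axis d2 1"
    have vu0: "inner v u = 0" using True by (simp add: v_def u1_def inner_axis')
    have nv: "norm v = 1" unfolding v_def using norm_two_axis[OF assms(1), of 1 0] by simp
    have ipv: "inner v (PP d1 d2 b c e j) = alp b c j" for j
      using ip[of 1 0 j] unfolding v_def by simp
    from key[OF vu0, of b a] have "2 \<le> 2 * s"
      by (simp add: ipv alps nv)
    then have "1 \<le> s" by simp
    then have "1 \<le> s\<^sup>2" using s0 by (simp add: one_le_power)
    moreover have "e\<^sup>2 \<le> 1" using assms by (simp add: power_le_one)
    ultimately show ?thesis using ss by simp
  next
    case False
    define v where "v = u2 *\<^sub>R axis d1 (1::real) + (- u1) *\<^sub>R axis d2 1"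
    have "inner v u = 0" by (simp add: v_def u1_def u2_def inner_add_left inner_diff_left inner_axis')
    note k = key[OF this]
    define r where "r = norm v"
    have r2: "r\<^sup>2 = u1\<^sup>2 + u2\<^sup>2" unfolding r_def v_def norm_two_axis[OF assms(1)] by simp
    have rpos: "0 < r\<^sup>2" using False r2 by (metis add_nonneg_pos add_pos_nonneg not_real_square_gt_zero power2_eq_square zero_le_power2)
    have h1: "\<bar>2 * u2\<bar> \<le> 2 * r * s"
      using k[of b a] by (simp add: ip[of u2 "-u1", folded v_def] alps r_def)
    have h2: "\<bar>u2 - u1 * e\<bar> \<le> 2 * r * s"
      using k[of c a] by (simp add: ip[of u2 "-u1", folded v_def] alps r_def)
    have r0: "0 \<le> r" by (simp add: r_def)
    have a2: "\<bar>u2\<bar> \<le> r * s" using h1 by simp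
    have a1: "\<bar>e * u1\<bar> \<le> 3 * (r * s)" 
    proof -
      have h2': "\<bar>u2 - e * u1\<bar> \<le> 2 * (r * s)" using h2 by (simp add: ac_simps)
      show ?thesis using a2 h2' by linarith
    qed
    have q1: "(e * u1)\<^sup>2 \<le> 9 * (r * s)\<^sup>2"
    proof -
      have "(e * u1)\<^sup>2 = \<bar>e * u1\<bar>\<^sup>2" by simp
      also have "\<dots> \<le> (3 * (r * s))\<^sup>2" using a1 by (intro power_mono) auto
      finally show ?thesis by (simp add: power_mult_distrib)
    qed
    have q2: "u2\<^sup>2 \<le> (r * s)\<^sup>2"
    proof -
      have "u2\<^sup>2 = \<bar>u2\<bar>\<^sup>2" by simp
      also have "\<dots> \<le> (r * s)\<^sup>2" using a2 by (intro power_mono) auto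
      finally show ?thesis .
    qed
    have q3: "(e * u2)\<^sup>2 \<le> u2\<^sup>2"
      using assms by (simp add: power_mult_distrib mult_left_le_one_le power_le_one)
    have "e\<^sup>2 * r\<^sup>2 = (e * u1)\<^sup>2 + (e * u2)\<^sup>2" by (simp add: r2 power_mult_distrib algebra_simps)
    also have "\<dots> \<le> 10 * (r * s)\<^sup>2" using q1 q2 q3 by simp
    also have "\<dots> = (10 * s\<^sup>2) * r\<^sup>2" by (simp add: power_mult_distrib)
    finally have "e\<^sup>2 \<le> 10 * s\<^sup>2" using rpos by simp
    then show ?thesis using ss by simp
  qed
qed


lemma not_sub2: "CARD('n::finite) \<ge> 3 \<Longrightarrow> \<not> (UNIV :: 'n set) \<subseteq> {a, b}"
proof
  assume "CARD('n) \<ge> 3" "(UNIV :: 'n set) \<subseteq> {a, b}"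
  then have "CARD('n) \<le> card {a, b}" by (intro card_mono) auto
  also have "\<dots> \<le> 2" by (simp add: card_insert_if)
  finally show False using \<open>CARD('n) \<ge> 3\<close> by simp
qed

lemma not_sub1: "CARD('n::finite) \<ge> 2 \<Longrightarrow> \<not> (UNIV :: 'n set) \<subseteq> {a}"
proof
  assume "CARD('n) \<ge> 2" "(UNIV :: 'n set) \<subseteq> {a}"
  then have "CARD('n) \<le> card {a}" by (intro card_mono) auto
  then show False using \<open>CARD('n) \<ge> 2\<close> by simp
qed

lemma pd_lower:
  fixes b c :: "'n::finite" and d1 d2 :: "'d::finite"
  assumes "d1 \<noteq> d2" "a \<noteq> b" "a \<noteq> c" "b \<noteq> c" "0 < e" "e \<le> 1"
  shows "e / 4 \<le> procrustes_dist (XX d1 d2 b c e) (XX d1 d2 b c 0)"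
proof -
  let ?A = "{(\<Sum>j\<in>UNIV. (norm (column j (XX d1 d2 b c e) - R *v column (\<pi> j) (XX d1 d2 b c 0) + t))\<^sup>2) | \<pi> R t.
       \<pi> permutes (UNIV :: 'n set) \<and> orthogonal_matrix (R :: real^'d^'d)}"
  have ne: "?A \<noteq> {}"
    using permutes_id orthogonal_matrix_id by blast
  have "e\<^sup>2 / 10 \<le> Inf ?A"
    by (rule cInf_greatest[OF ne]) (use lower_sum[OF assms] in blast)
  moreover have "(e / 4)\<^sup>2 \<le> e\<^sup>2 / 10" by (simp add: power_divide)
  ultimately have "(e / 4)\<^sup>2 \<le> Inf ?A" by linarith
  then have "e / 4 \<le> sqrt (Inf ?A)" by (rule real_le_rsqrt)
  then show ?thesis unfolding procrustes_dist_def .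
qed


theorem corollary1:
  fixes \<phi> :: "nat \<Rightarrow> real list \<Rightarrow> real list"
    and \<psi> :: "nat \<Rightarrow> ('n::finite \<Rightarrow> real list) \<Rightarrow> real list"
    and readout :: "('n \<Rightarrow> real list) \<Rightarrow> real list"
    and k p :: "nat \<Rightarrow> nat" and m T :: nat
  assumes "CARD('n) \<ge> 3" and "CARD('d::finite) \<ge> 2" and "T \<ge> 1"
    and "\<forall>t<T. multiset_map (2 * k t + 1) (p t) (\<psi> t) \<and> lipschitz_mset (2 * k t + 1) (\<psi> t)"
    and "\<forall>t<T. euclid_map (k t + p t) (k (Suc t)) (\<phi> t) \<and> lipschitz_vec (k t + p t) (\<phi> t)"
    and "multiset_map (k T) m readout" and "lipschitz_mset (k T) readout"
  shows "\<not> (\<exists>c>0. \<forall>X Y :: real^'n^'d.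
            c * procrustes_dist X Y \<le> ldist (wl_model \<phi> \<psi> readout (k 0) T X) (wl_model \<phi> \<psi> readout (k 0) T Y))"
proof
  assume "\<exists>c>0. \<forall>X Y :: real^'n^'d.
            c * procrustes_dist X Y \<le> ldist (wl_model \<phi> \<psi> readout (k 0) T X) (wl_model \<phi> \<psi> readout (k 0) T Y)"
  then obtain c where c0: "c > 0" and cH: "\<And>X Y :: real^'n^'d.
            c * procrustes_dist X Y \<le> ldist (wl_model \<phi> \<psi> readout (k 0) T X) (wl_model \<phi> \<psi> readout (k 0) T Y)"
    by blast
  obtain a :: 'n where True by simp
  obtain b :: 'n where "b \<notin> {a}" using not_sub1[of a] assms(1) by force
  obtain cc :: 'n where "cc \<notin> {a, b}" using not_sub2[of a b] assms(1) by force
  obtain d1 :: 'd where True by simp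
  obtain d2 :: 'd where "d2 \<notin> {d1}" using not_sub1[of d1] assms(2) by force
  have dist: "d1 \<noteq> d2" "a \<noteq> b" "a \<noteq> cc" "b \<noteq> cc"
    using \<open>b \<notin> {a}\<close> \<open>cc \<notin> {a, b}\<close> \<open>d2 \<notin> {d1}\<close> by auto
  obtain C where C0: "C \<ge> 0" and C: "\<And>(X :: real^'n^'d) Y i.
     ldist (wl_colors \<phi> \<psi> (k 0) X T i) (wl_colors \<phi> \<psi> (k 0) Y T i) \<le> C * Dlt X Y"
    using colors_lip[of T k p \<psi> \<phi> T] assms(4,5) by auto
  have len: "length (wl_colors \<phi> \<psi> (k 0) X T j) = k T" for X :: "real^'n^'d" and j
    by (rule colors_len[of T k p \<psi> \<phi>]) (use assms(4,5) in auto)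
  obtain Lr where Lr0: "Lr \<ge> 0" and Lr: "\<And>M N. (\<forall>j. length (M j) = k T) \<Longrightarrow> (\<forall>j. length (N j) = k T) \<Longrightarrow> ldist (readout M) (readout N) \<le> Lr * mat_dist M N"
    using assms(7) lip_mset_obtain by metis
  define K where "K = Lr * (real CARD('n) * C)"
  have K0: "K \<ge> 0" using Lr0 C0 by (simp add: K_def)
  have up: "ldist (wl_model \<phi> \<psi> readout (k 0) T X) (wl_model \<phi> \<psi> readout (k 0) T Y) \<le> K * Dlt X Y"
    for X Y :: "real^'n^'d"
  proof -
    have "ldist (wl_model \<phi> \<psi> readout (k 0) T X) (wl_model \<phi> \<psi> readout (k 0) T Y)
        \<le> Lr * mat_dist (\<lambda>i. wl_colors \<phi> \<psi> (k 0) X T i) (\<lambda>i. wl_colors \<phi> \<psi> (k 0) Y T i)"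
      unfolding wl_model_def using len by (intro Lr) auto
    also have "\<dots> \<le> Lr * (\<Sum>i\<in>UNIV. ldist (wl_colors \<phi> \<psi> (k 0) X T i) (wl_colors \<phi> \<psi> (k 0) Y T i))"
      using Lr0 mat_dist_le by (rule mult_left_mono[rotated])
    also have "\<dots> \<le> Lr * (\<Sum>i\<in>(UNIV::'n set). C * Dlt X Y)"
      using Lr0 C by (intro mult_left_mono sum_mono) auto
    also have "\<dots> = K * Dlt X Y" by (simp add: K_def)
    finally show ?thesis .
  qed
  define N where "N = real CARD('n) * real CARD('n)"
  have N0: "N \<ge> 0" by (simp add: N_def)
  define e where "e = min 1 (c / (8 * (K * N + 1)))"
  have KN0: "K * N \<ge> 0" using K0 N0 by simp
  have e0: "0 < e" using c0 KN0 by (simp add: e_def)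
  have e1: "e \<le> 1" by (simp add: e_def)
  have eK: "e * (K * N + 1) \<le> c / 8"
  proof -
    have "e \<le> c / (8 * (K * N + 1))" by (simp add: e_def)
    then have "e * (K * N + 1) \<le> c / (8 * (K * N + 1)) * (K * N + 1)"
      using KN0 by (intro mult_right_mono) auto
    also have "\<dots> = c / 8" using KN0 by (simp add: field_simps)
    finally show ?thesis .
  qed
  have "c * (e / 4) \<le> c * procrustes_dist (XX d1 d2 b cc e) (XX d1 d2 b cc 0)"
    using pd_lower[OF dist e0 e1] c0 by simp
  also have "\<dots> \<le> K * Dlt (XX d1 d2 b cc e) (XX d1 d2 b cc 0)" using cH up order_trans by blast
  also have "\<dots> \<le> K * (N * e\<^sup>2)"
    using Dlt_XX[of d1 d2 b cc e] dist K0 by (intro mult_left_mono) (auto simp: N_def)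
  finally have "c * (e / 4) \<le> (K * N * e) * e" by (simp add: power2_eq_square algebra_simps)
  then have "c / 4 \<le> K * N * e" using e0 by (simp add: field_simps)
  moreover have "K * N * e \<le> c / 8" using eK e0 by (simp add: algebra_simps)
  ultimately show False using c0 by simp
qed

end
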